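(* Let $A=\bigoplus_{m\in\omega_M}A_m\chi^m$ be an effectively $M$-graded affine $\mathbf k$-algebra with weight cone $\omega$, and let $\partial_1,\partial_2$ be homogeneous locally nilpotent derivations of $A$ of degrees $e_1,e_2\in M$ respectively (of arbitrary, not necessarily fiber, type). If the line $\{te_1+(1-t)e_2 : t\in\mathbb Q\}\subseteq M_{\mathbb Q}$ does not intersect the weight cone $\omega$, then $\partial_1+\partial_2$ is locally nilpotent.
   Context: $\mathbf k$ is an algebraically closed field of characteristic zero, $M$ a lattice, $M_{\mathbb Q}=M\otimes\mathbb Q$; $A$ is a finitely generated commutative $\mathbf k$-domain with an effective $M$-grading; the weight cone $\omega\subseteq M_{\mathbb Q}$ is the cone spanned by $\{m\in M:A_m\neq0\}$ and $\omega_M=\omega\cap M$. A derivation $\partial$ is homogeneous of degree $e$ if it maps the degree-$m$ component into the degree-$(m+e)$ component for all $m$; it is locally nilpotent if every element is killed by some power of $\partial$. *)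

theory Defs
  imports "HOL-Analysis.Finite_Cartesian_Product" "HOL-Computational_Algebra.Polynomial"
begin

text \<open>The algebra A is the whole ring of type 'a (an integral domain of
characteristic zero). The base field k is a subfield K of 'a (the image of k in A).
The lattice M is int^'n (free abelian group of rank CARD('n)), and M_Q = rat^'n.\<close>

definition subfield :: "'a::idom set \<Rightarrow> bool" where
  "subfield K \<longleftrightarrow> 0 \<in> K \<and> 1 \<in> K \<and> (\<forall>x\<in>K. \<forall>y\<in>K. x + y \<in> K \<and> x * y \<in> K \<and> - x \<in> K)
     \<and> (\<forall>x\<in>K. x \<noteq> 0 \<longrightarrow> (\<exists>y\<in>K. x * y = 1))"

definition alg_closed_subfield :: "'a::idom set \<Rightarrow> bool" where
  "alg_closed_subfield K \<longleftrightarrow> subfield K \<and>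
     (\<forall>p::'a poly. (\<forall>i. coeff p i \<in> K) \<and> degree p \<ge> 1 \<longrightarrow> (\<exists>x\<in>K. poly p x = 0))"

inductive_set subalg_gen :: "'a::comm_ring_1 set \<Rightarrow> 'a set \<Rightarrow> 'a set" for K S where
  base_K: "x \<in> K \<Longrightarrow> x \<in> subalg_gen K S"
| base_S: "x \<in> S \<Longrightarrow> x \<in> subalg_gen K S"
| add: "x \<in> subalg_gen K S \<Longrightarrow> y \<in> subalg_gen K S \<Longrightarrow> x + y \<in> subalg_gen K S"
| mult: "x \<in> subalg_gen K S \<Longrightarrow> y \<in> subalg_gen K S \<Longrightarrow> x * y \<in> subalg_gen K S"
| neg: "x \<in> subalg_gen K S \<Longrightarrow> - x \<in> subalg_gen K S"

definition finitely_generated_algebra :: "'a::comm_ring_1 set \<Rightarrow> bool" where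
  "finitely_generated_algebra K \<longleftrightarrow> (\<exists>S. finite S \<and> subalg_gen K S = UNIV)"

definition K_subspace :: "'a::comm_ring_1 set \<Rightarrow> 'a set \<Rightarrow> bool" where
  "K_subspace K V \<longleftrightarrow> 0 \<in> V \<and> (\<forall>x\<in>V. \<forall>y\<in>V. x + y \<in> V) \<and> (\<forall>c\<in>K. \<forall>x\<in>V. c * x \<in> V)"

definition graded_algebra :: "'a::comm_ring_1 set \<Rightarrow> (int^'n \<Rightarrow> 'a set) \<Rightarrow> bool" where
  "graded_algebra K G \<longleftrightarrow>
     (\<forall>m. K_subspace K (G m)) \<and>
     K \<subseteq> G 0 \<and>
     (\<forall>m m'. \<forall>x\<in>G m. \<forall>y\<in>G m'. x * y \<in> G (m + m')) \<and>
     (\<forall>a. \<exists>!f. finite {m. f m \<noteq> 0} \<and> (\<forall>m. f m \<in> G m) \<and> a = (\<Sum>m\<in>{m. f m \<noteq> 0}. f m))"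

definition weights :: "(int^'n \<Rightarrow> 'a::zero set) \<Rightarrow> (int^'n) set" where
  "weights G = {m. G m \<noteq> {0}}"

definition effective :: "(int^'n \<Rightarrow> 'a::zero set) \<Rightarrow> bool" where
  "effective G \<longleftrightarrow> (\<forall>v::int^'n. \<exists>F z. finite F \<and> F \<subseteq> weights G \<and>
      (\<forall>i. v $ i = (\<Sum>w\<in>F. z w * w $ i)))"

definition weight_cone :: "(int^'n \<Rightarrow> 'a::zero set) \<Rightarrow> (rat^'n) set" where
  "weight_cone G = {v. \<exists>F c. finite F \<and> F \<subseteq> weights G \<and> (\<forall>w\<in>F. c w \<ge> (0::rat)) \<and>
      (\<forall>i. v $ i = (\<Sum>w\<in>F. c w * of_int (w $ i)))}"

definition K_derivation :: "'a::comm_ring_1 set \<Rightarrow> ('a \<Rightarrow> 'a) \<Rightarrow> bool" where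
  "K_derivation K D \<longleftrightarrow> (\<forall>x y. D (x + y) = D x + D y) \<and> (\<forall>x y. D (x * y) = x * D y + y * D x)
     \<and> (\<forall>c\<in>K. D c = 0)"

definition homogeneous_of_degree :: "(int^'n \<Rightarrow> 'a set) \<Rightarrow> ('a \<Rightarrow> 'a) \<Rightarrow> int^'n \<Rightarrow> bool" where
  "homogeneous_of_degree G D e \<longleftrightarrow> (\<forall>m. \<forall>x\<in>G m. D x \<in> G (m + e))"

definition locally_nilpotent :: "('a::zero \<Rightarrow> 'a) \<Rightarrow> bool" where
  "locally_nilpotent D \<longleftrightarrow> (\<forall>a. \<exists>n. (D ^^ n) a = 0)"

definition line_through :: "int^'n \<Rightarrow> int^'n \<Rightarrow> (rat^'n) set" where
  "line_through e1 e2 = {v. \<exists>t::rat. \<forall>i. v $ i = t * of_int (e1 $ i) + (1 - t) * of_int (e2 $ i)}"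

end

theory Submission
  imports Defs "HOL-Library.Ramsey"
begin

lemma subspace_sum:
  assumes "K_subspace K V" "\<forall>x\<in>A. f x \<in> V"
  shows "sum f A \<in> V"
proof (cases "finite A")
  case True
  then show ?thesis using assms
    by (induction A rule: finite_induct) (auto simp: K_subspace_def)
next
  case False
  then show ?thesis using assms by (simp add: K_subspace_def)
qed

definition Mon :: "(int^'n) set \<Rightarrow> (int^'n) set" where
  "Mon W = {v. \<exists>c::int^'n \<Rightarrow> nat. \<forall>i. v$i = (\<Sum>w\<in>W. int (c w) * w$i)}"

lemma Mon_0: "0 \<in> Mon W"
  unfolding Mon_def by (rule CollectI, rule exI[of _ "\<lambda>_. 0"]) simp

lemma Mon_add: "p \<in> Mon W \<Longrightarrow> q \<in> Mon W \<Longrightarrow> p + q \<in> Mon W"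
proof -
  assume "p \<in> Mon W" "q \<in> Mon W"
  then obtain c d where c: "\<forall>i. p$i = (\<Sum>w\<in>W. int (c w) * w$i)"
      and d: "\<forall>i. q$i = (\<Sum>w\<in>W. int (d w) * w$i)" unfolding Mon_def by blast
  have *: "\<forall>i. (p+q)$i = (\<Sum>w\<in>W. int (c w + d w) * w$i)"
    using c d by (simp add: sum.distrib distrib_right)
  show ?thesis unfolding Mon_def
    apply (rule CollectI, rule exI[of _ "\<lambda>w. c w + d w"]) using * by simp
qed

lemma Mon_gen: "finite W \<Longrightarrow> w \<in> W \<Longrightarrow> w \<in> Mon W"
proof -
  assume "finite W" "w \<in> W"
  have *: "\<forall>i. w$i = (\<Sum>u\<in>W. int (if u = w then 1 else 0) * u$i)"
  proof
    fix i
    have "(\<Sum>u\<in>W. int (if u = w then 1 else 0) * u$i) = (\<Sum>u\<in>W. if u = w then w$i else 0)"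
      by (rule sum.cong) auto
    then show "w$i = (\<Sum>u\<in>W. int (if u = w then 1 else 0) * u$i)"
      using \<open>finite W\<close> \<open>w \<in> W\<close> by simp
  qed
  show ?thesis unfolding Mon_def
    apply (rule CollectI, rule exI[of _ "\<lambda>u. if u = w then 1 else 0"]) using * by simp
qed

definition Qd :: "(int^'n \<Rightarrow> 'a::comm_ring_1 set) \<Rightarrow> (int^'n) set \<Rightarrow> 'a \<Rightarrow> bool" where
  "Qd G W a \<longleftrightarrow> (\<exists>f F. finite F \<and> F \<subseteq> Mon W \<and> (\<forall>m. f m \<in> G m) \<and> (\<forall>m. m \<notin> F \<longrightarrow> f m = 0)
      \<and> a = sum f F)"

lemma Qd_subalg:
  fixes K :: "'a::idom set" and G :: "int^'n \<Rightarrow> 'a set"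
  assumes sf: "subfield K" and ga: "graded_algebra K G"
    and SW: "\<forall>s\<in>S. Qd G W s"
    and x: "x \<in> subalg_gen K S"
  shows "Qd G W x"
  using x
proof (induction x rule: subalg_gen.induct)
  have sub: "\<And>m. K_subspace K (G m)" using ga unfolding graded_algebra_def by blast
  case (base_K x)
  have "x \<in> G 0" using ga base_K unfolding graded_algebra_def by blast
  define f where "f = (\<lambda>m::int^'n. if m = 0 then x else 0)"
  have "\<forall>m. f m \<in> G m" using \<open>x \<in> G 0\<close> sub unfolding f_def K_subspace_def by auto
  moreover have "\<forall>m. m \<notin> {0} \<longrightarrow> f m = 0" unfolding f_def by auto
  moreover have "x = sum f {0}" unfolding f_def by simp
  ultimately show ?case unfolding Qd_def using Mon_0 by blast
next
  case (base_S x)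
  then show ?case using SW by blast
next
  case (add x y)
  have sub: "\<And>m. K_subspace K (G m)" using ga unfolding graded_algebra_def by blast
  from add.IH obtain f F g F' where
    f: "finite F" "F \<subseteq> Mon W" "\<forall>m. f m \<in> G m" "\<forall>m. m \<notin> F \<longrightarrow> f m = 0" "x = sum f F"
    and g: "finite F'" "F' \<subseteq> Mon W" "\<forall>m. g m \<in> G m" "\<forall>m. m \<notin> F' \<longrightarrow> g m = 0" "y = sum g F'"
    unfolding Qd_def by blast
  have "sum f F = sum f (F \<union> F')" using f g by (intro sum.mono_neutral_left) auto
  moreover have "sum g F' = sum g (F \<union> F')" using f g by (intro sum.mono_neutral_left) auto
  ultimately have "x + y = sum (\<lambda>m. f m + g m) (F \<union> F')" using f g by (simp add: sum.distrib)
  moreover have "\<forall>m. f m + g m \<in> G m" using f g sub unfolding K_subspace_def by blast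
  moreover have "\<forall>m. m \<notin> F \<union> F' \<longrightarrow> f m + g m = 0" using f g by auto
  ultimately show ?case unfolding Qd_def using f g
    by (intro exI[of _ "\<lambda>m. f m + g m"] exI[of _ "F \<union> F'"]) auto
next
  case (neg x)
  have sub: "\<And>m. K_subspace K (G m)" using ga unfolding graded_algebra_def by blast
  from neg.IH obtain f F where
    f: "finite F" "F \<subseteq> Mon W" "\<forall>m. f m \<in> G m" "\<forall>m. m \<notin> F \<longrightarrow> f m = 0" "x = sum f F"
    unfolding Qd_def by blast
  have m1: "-1 \<in> K" using sf unfolding subfield_def by blast
  have "\<forall>m. - f m \<in> G m"
  proof
    fix m
    have "(-1) * f m \<in> G m" using sub[of m] m1 f(3) unfolding K_subspace_def by blast
    then show "- f m \<in> G m" by simp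
  qed
  moreover have "- x = sum (\<lambda>m. - f m) F" using f by (simp add: sum_negf)
  ultimately show ?case unfolding Qd_def using f by (intro exI[of _ "\<lambda>m. - f m"] exI[of _ F]) auto
next
  case (mult x y)
  have sub: "\<And>m. K_subspace K (G m)" using ga unfolding graded_algebra_def by blast
  have mul: "\<And>m m' a b. a \<in> G m \<Longrightarrow> b \<in> G m' \<Longrightarrow> a * b \<in> G (m + m')"
    using ga unfolding graded_algebra_def by blast
  from mult.IH obtain f F g F' where
    f: "finite F" "F \<subseteq> Mon W" "\<forall>m. f m \<in> G m" "\<forall>m. m \<notin> F \<longrightarrow> f m = 0" "x = sum f F"
    and g: "finite F'" "F' \<subseteq> Mon W" "\<forall>m. g m \<in> G m" "\<forall>m. m \<notin> F' \<longrightarrow> g m = 0" "y = sum g F'"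
    unfolding Qd_def by blast
  define P where "P = F \<times> F'"
  define s where "s = (\<lambda>pq::(int^'n)\<times>(int^'n). fst pq + snd pq)"
  define k where "k = (\<lambda>pq::(int^'n)\<times>(int^'n). f (fst pq) * g (snd pq))"
  define h where "h = (\<lambda>m. sum k {pq. pq \<in> P \<and> s pq = m})"
  define F'' where "F'' = s ` P"
  have finP: "finite P" unfolding P_def using f g by simp
  have "finite F''" unfolding F''_def using finP by simp
  moreover have "F'' \<subseteq> Mon W" unfolding F''_def P_def s_def using f g by (auto intro!: Mon_add)
  moreover have "\<forall>m. h m \<in> G m"
  proof
    fix m
    show "h m \<in> G m" unfolding h_def
    proof (rule subspace_sum[OF sub], intro ballI)
      fix pq assume "pq \<in> {pq. pq \<in> P \<and> s pq = m}"
      then have "s pq = m" by simp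
      then show "k pq \<in> G m" unfolding k_def s_def using mul f(3) g(3) by blast
    qed
  qed
  moreover have "\<forall>m. m \<notin> F'' \<longrightarrow> h m = 0"
  proof (intro allI impI)
    fix m assume "m \<notin> F''"
    then have e: "{pq. pq \<in> P \<and> s pq = m} = {}" unfolding F''_def by blast
    show "h m = 0" unfolding h_def e by simp
  qed
  moreover have "x * y = sum h F''"
  proof -
    have "x * y = (\<Sum>i\<in>F. \<Sum>j\<in>F'. f i * g j)" using f g by (simp add: sum_product)
    also have "\<dots> = sum k P" unfolding P_def k_def by (simp add: sum.cartesian_product split_beta)
    also have "\<dots> = sum h F''" unfolding h_def F''_def
      by (rule sum.group[symmetric]) (use finP in auto)
    finally show ?thesis .
  qed
  ultimately show ?case unfolding Qd_def by blast
qed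

lemma ex1_eq: "\<exists>!x. P x \<Longrightarrow> P a \<Longrightarrow> P b \<Longrightarrow> a = b" by blast

lemma weights_Mon:
  fixes K :: "'a::idom set" and G :: "int^'n \<Rightarrow> 'a set"
  assumes sf: "subfield K" and ga: "graded_algebra K G" and fg: "finitely_generated_algebra K"
  shows "\<exists>W. finite W \<and> W \<subseteq> weights G \<and> weights G \<subseteq> Mon W"
proof -
  have sub: "\<And>m. K_subspace K (G m)" using ga unfolding graded_algebra_def by blast
  have dec: "\<forall>a. \<exists>!f. finite {m. f m \<noteq> 0} \<and> (\<forall>m. f m \<in> G m) \<and> a = (\<Sum>m\<in>{m. f m \<noteq> 0}. f m)"
    using ga unfolding graded_algebra_def by blast
  obtain S where S: "finite S" "subalg_gen K S = UNIV" using fg unfolding finitely_generated_algebra_def by blast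
  have "\<forall>a. \<exists>f. finite {m. f m \<noteq> 0} \<and> (\<forall>m. f m \<in> G m) \<and> a = (\<Sum>m\<in>{m. f m \<noteq> 0}. f m)"
  proof
    fix a show "\<exists>f. finite {m. f m \<noteq> 0} \<and> (\<forall>m. f m \<in> G m) \<and> a = (\<Sum>m\<in>{m. f m \<noteq> 0}. f m)"
      by (rule ex1_implies_ex) (rule dec[rule_format])
  qed
  from choice[OF this] obtain comp where comp0: "\<forall>a. finite {m. comp a m \<noteq> 0} \<and> (\<forall>m. comp a m \<in> G m)
       \<and> a = (\<Sum>m\<in>{m. comp a m \<noteq> 0}. comp a m)" by (elim exE)
  have comp1: "\<And>a. finite {m. comp a m \<noteq> 0}" and comp2: "\<And>a m. comp a m \<in> G m"
    and comp3: "\<And>a. a = (\<Sum>m\<in>{m. comp a m \<noteq> 0}. comp a m)" using comp0 by blast+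
  define W where "W = (\<Union>s\<in>S. {m. comp s m \<noteq> 0})"
  have finW: "finite W" unfolding W_def by (rule finite_UN_I[OF S(1) comp1])
  have Ww: "W \<subseteq> weights G"
  proof
    fix m assume "m \<in> W"
    then obtain s where "comp s m \<noteq> 0" unfolding W_def by blast
    moreover have "comp s m \<in> G m" by (rule comp2)
    ultimately show "m \<in> weights G" unfolding weights_def by auto
  qed
  have QS: "\<forall>s\<in>S. Qd G W s"
  proof
    fix s assume "s \<in> S"
    have "{m. comp s m \<noteq> 0} \<subseteq> W" unfolding W_def using \<open>s \<in> S\<close> by blast
    then have "{m. comp s m \<noteq> 0} \<subseteq> Mon W" using Mon_gen[OF finW] by blast
    then show "Qd G W s" unfolding Qd_def
      apply (intro exI[of _ "comp s"] exI[of _ "{m. comp s m \<noteq> 0}"] conjI comp1 allI impI comp2 comp3)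
      by auto
  qed
  have "weights G \<subseteq> Mon W"
  proof
    fix v assume "v \<in> weights G"
    then have "G v \<noteq> {0}" unfolding weights_def by simp
    moreover have "0 \<in> G v" using sub unfolding K_subspace_def by blast
    ultimately obtain x where x: "x \<in> G v" "x \<noteq> 0" by blast
    have "x \<in> subalg_gen K S" using S by simp
    then have "Qd G W x" using Qd_subalg[OF sf ga QS] by blast
    then obtain f F where f: "finite F" "F \<subseteq> Mon W" "\<forall>m. f m \<in> G m" "\<forall>m. m \<notin> F \<longrightarrow> f m = 0" "x = sum f F"
      unfolding Qd_def by blast
    define d where "d = (\<lambda>m. if m = v then x else 0)"
    have s1: "{m. f m \<noteq> 0} \<subseteq> F" using f by blast
    have P1: "finite {m. f m \<noteq> 0} \<and> (\<forall>m. f m \<in> G m) \<and> x = (\<Sum>m\<in>{m. f m \<noteq> 0}. f m)"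
    proof (intro conjI)
      show "finite {m. f m \<noteq> 0}" using s1 f(1) finite_subset by blast
      show "\<forall>m. f m \<in> G m" using f by blast
      show "x = (\<Sum>m\<in>{m. f m \<noteq> 0}. f m)" unfolding f(5)
        by (rule sum.mono_neutral_right[OF f(1) s1]) simp
    qed
    have sd: "{m. d m \<noteq> 0} = {v}" unfolding d_def using x by auto
    have P2: "finite {m. d m \<noteq> 0} \<and> (\<forall>m. d m \<in> G m) \<and> x = (\<Sum>m\<in>{m. d m \<noteq> 0}. d m)"
      unfolding sd
    proof (intro conjI allI)
      fix m show "d m \<in> G m" using x sub[of m] unfolding d_def K_subspace_def by auto
    qed (simp_all add: d_def)
    have "f = d"
      by (rule ex1_eq[where P="\<lambda>f. finite {m. f m \<noteq> 0} \<and> (\<forall>m. f m \<in> G m) \<and> x = (\<Sum>m\<in>{m. f m \<noteq> 0}. f m)",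
            OF dec[rule_format, of x] P1 P2])
    then have "f v \<noteq> 0" unfolding d_def using x by simp
    then have "v \<in> F" using f by blast
    then show "v \<in> Mon W" using f by blast
  qed
  then show ?thesis using finW Ww by blast
qed


lemma nat_seq_mono_sub:
  fixes s :: "nat \<Rightarrow> nat" and Z :: "nat set"
  assumes "infinite Z"
  shows "\<exists>Y\<subseteq>Z. infinite Y \<and> (\<forall>x\<in>Y. \<forall>y\<in>Y. x < y \<longrightarrow> s x \<le> s y)"
proof -
  define f where "f = (\<lambda>X::nat set. if s (Min X) \<le> s (Max X) then 0 else (1::nat))"
  have "\<forall>x\<in>Z. \<forall>y\<in>Z. x \<noteq> y \<longrightarrow> f {x, y} < 2" unfolding f_def by auto
  from Ramsey2[OF assms this] obtain Y t where Y: "Y \<subseteq> Z" "infinite Y" "t < 2"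
    "\<forall>x\<in>Y. \<forall>y\<in>Y. x \<noteq> y \<longrightarrow> f {x, y} = t" by blast
  have key: "\<And>x y. x \<in> Y \<Longrightarrow> y \<in> Y \<Longrightarrow> x < y \<Longrightarrow> f {x,y} = (if s x \<le> s y then 0 else 1)"
    unfolding f_def by (simp add: min_def max_def)
  show ?thesis
  proof (cases "t = 0")
    case True
    then have "\<forall>x\<in>Y. \<forall>y\<in>Y. x < y \<longrightarrow> s x \<le> s y" using Y(4) key
      by (metis less_irrefl one_neq_zero)
    then show ?thesis using Y by blast
  next
    case False
    then have dec: "\<And>x y. x \<in> Y \<Longrightarrow> y \<in> Y \<Longrightarrow> x < y \<Longrightarrow> s y < s x" using Y(4) key
      by (metis less_irrefl not_le)
    obtain y0 where y0: "y0 \<in> Y" using Y(2) by (metis finite.emptyI ex_in_conv)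
    define Y' where "Y' = {y\<in>Y. y0 < y}"
    have "Y' = Y - {..y0}" unfolding Y'_def by auto
    then have infY': "infinite Y'" using Y(2) by simp
    have "inj_on s Y'"
    proof (rule inj_onI)
      fix x y assume "x \<in> Y'" "y \<in> Y'" "s x = s y"
      then show "x = y" unfolding Y'_def using dec by (metis linorder_neqE_nat less_irrefl mem_Collect_eq)
    qed
    moreover have "s ` Y' \<subseteq> {..<s y0}" unfolding Y'_def using dec y0 by auto
    then have "finite (s ` Y')" using finite_subset by blast
    ultimately have "finite Y'" using finite_imageD by blast
    then show ?thesis using infY' by blast
  qed
qed

lemma dickson_sub:
  fixes v :: "nat \<Rightarrow> 'i \<Rightarrow> nat"
  assumes "finite I"
  shows "infinite Z \<Longrightarrow> \<exists>Y\<subseteq>Z. infinite Y \<and> (\<forall>x\<in>Y. \<forall>y\<in>Y. x < y \<longrightarrow> (\<forall>i\<in>I. v x i \<le> v y i))"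
  using assms(1)
proof (induction I arbitrary: Z rule: finite_induct)
  case empty
  then show ?case by blast
next
  case (insert a I)
  from insert.IH[OF insert.prems] obtain Y where Y: "Y \<subseteq> Z" "infinite Y"
    "\<forall>x\<in>Y. \<forall>y\<in>Y. x < y \<longrightarrow> (\<forall>i\<in>I. v x i \<le> v y i)" by blast
  from nat_seq_mono_sub[OF Y(2), of "\<lambda>x. v x a"] obtain Y' where
    "Y' \<subseteq> Y" "infinite Y'" "\<forall>x\<in>Y'. \<forall>y\<in>Y'. x < y \<longrightarrow> v x a \<le> v y a" by blast
  then show ?case using Y by (intro exI[of _ Y']) blast
qed

lemma dickson:
  fixes v :: "nat \<Rightarrow> 'i \<Rightarrow> nat"
  assumes "finite I"
  shows "\<exists>p q. p < q \<and> (\<forall>i\<in>I. v p i \<le> v q i)"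
proof -
  obtain Y where Y: "infinite Y" "\<forall>x\<in>Y. \<forall>y\<in>Y. x < y \<longrightarrow> (\<forall>i\<in>I. v x i \<le> v y i)"
    using dickson_sub[OF assms, of UNIV v] by auto
  obtain p where p: "p \<in> Y" using Y(1) by (metis finite.emptyI ex_in_conv)
  have "{y\<in>Y. p < y} = Y - {..p}" by auto
  then have "infinite {y\<in>Y. p < y}" using Y(1) by simp
  then obtain q where "q \<in> Y" "p < q" by (metis (mono_tags, lifting) empty_Collect_eq finite.emptyI)
  then show ?thesis using Y p by blast
qed

lemma no_weights_far:
  fixes W :: "(int^'n) set" and G :: "int^'n \<Rightarrow> 'a::zero set"
  assumes finW: "finite W" and Ww: "W \<subseteq> weights G" and wM: "weights G \<subseteq> Mon W"
    and disj: "line_through e1 e2 \<inter> weight_cone G = {}"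
  shows "\<exists>n. \<forall>j\<le>n. (\<chi> i. m$i + int j * e1$i + int (n - j) * e2$i) \<notin> weights G"
proof (rule ccontr)
  assume "\<not> ?thesis"
  then have "\<forall>n. \<exists>j. j \<le> n \<and> (\<chi> i. m$i + int j * e1$i + int (n - j) * e2$i) \<in> weights G" by blast
  from choice[OF this] obtain J where J0: "\<forall>n. J n \<le> n \<and> (\<chi> i. m$i + int (J n) * e1$i + int (n - J n) * e2$i) \<in> weights G"
    by (elim exE)
  have J: "\<And>n. J n \<le> n" "\<And>n. (\<chi> i. m$i + int (J n) * e1$i + int (n - J n) * e2$i) \<in> weights G"
    using J0 by blast+
  have "\<forall>n. \<exists>c::int^'n \<Rightarrow> nat. \<forall>i. m$i + int (J n) * e1$i + int (n - J n) * e2$i = (\<Sum>w\<in>W. int (c w) * w$i)"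
  proof
    fix n
    have "(\<chi> i. m$i + int (J n) * e1$i + int (n - J n) * e2$i) \<in> Mon W" using J(2)[of n] wM by blast
    then show "\<exists>c::int^'n \<Rightarrow> nat. \<forall>i. m$i + int (J n) * e1$i + int (n - J n) * e2$i = (\<Sum>w\<in>W. int (c w) * w$i)"
      unfolding Mon_def by simp
  qed
  from choice[OF this] obtain C where C0: "\<forall>n. \<forall>i. m$i + int (J n) * e1$i + int (n - J n) * e2$i = (\<Sum>w\<in>W. int (C n w) * w$i)"
    by (elim exE)
  have C: "\<And>n i. m$i + int (J n) * e1$i + int (n - J n) * e2$i = (\<Sum>w\<in>W. int (C n w) * w$i)"
    using C0 by blast
  define v where "v = (\<lambda>n x. case x of Inl w \<Rightarrow> C n w | Inr b \<Rightarrow> if b then J n else n - J n)"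
  define I where "I = Inl ` W \<union> Inr ` (UNIV :: bool set)"
  have "finite I" unfolding I_def using finW by simp
  from dickson[OF this, of v] obtain p q where pq: "p < q" "\<forall>i\<in>I. v p i \<le> v q i" by blast
  have Cle: "\<And>w. w \<in> W \<Longrightarrow> C p w \<le> C q w"
  proof -
    fix w assume "w \<in> W"
    then have "Inl w \<in> I" unfolding I_def by simp
    then show "C p w \<le> C q w" using pq(2) unfolding v_def by fastforce
  qed
  have "Inr True \<in> I" unfolding I_def by blast
  then have Jle: "J p \<le> J q" using pq(2) unfolding v_def by fastforce
  have "Inr False \<in> I" unfolding I_def by blast
  then have Jle2: "p - J p \<le> q - J q" using pq(2) unfolding v_def by fastforce
  define \<alpha> where "\<alpha> = int (J q) - int (J p)"
  define \<beta> where "\<beta> = int (q - J q) - int (p - J p)"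
  have a0: "\<alpha> \<ge> 0" "\<beta> \<ge> 0" unfolding \<alpha>_def \<beta>_def using Jle Jle2 by auto
  have ab: "\<alpha> + \<beta> = int q - int p" unfolding \<alpha>_def \<beta>_def using J(1)[of p] J(1)[of q] by auto
  then have abpos: "\<alpha> + \<beta> > 0" using pq(1) by simp
  have eq: "\<And>i. \<alpha> * e1$i + \<beta> * e2$i = (\<Sum>w\<in>W. (int (C q w) - int (C p w)) * w$i)"
  proof -
    fix i
    have "(\<Sum>w\<in>W. (int (C q w) - int (C p w)) * w$i) = (\<Sum>w\<in>W. int (C q w) * w$i) - (\<Sum>w\<in>W. int (C p w) * w$i)"
      by (simp add: sum_subtractf left_diff_distrib)
    also have "\<dots> = (m$i + int (J q) * e1$i + int (q - J q) * e2$i) - (m$i + int (J p) * e1$i + int (p - J p) * e2$i)"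
      using C[where n=q and i=i] C[where n=p and i=i] by simp
    also have "\<dots> = \<alpha> * e1$i + \<beta> * e2$i" unfolding \<alpha>_def \<beta>_def by (simp add: algebra_simps)
    finally show "\<alpha> * e1$i + \<beta> * e2$i = (\<Sum>w\<in>W. (int (C q w) - int (C p w)) * w$i)" by simp
  qed
  define \<sigma> where "\<sigma> = (of_int (\<alpha> + \<beta>) :: rat)"
  have spos: "\<sigma> > 0" unfolding \<sigma>_def using abpos by simp
  define t where "t = of_int \<alpha> / \<sigma>"
  define c where "c = (\<lambda>w. of_int (int (C q w) - int (C p w)) / \<sigma>)"
  define u where "u = (\<chi> i. t * of_int (e1$i) + (1 - t) * of_int (e2$i) :: rat^'n)"
  have "u \<in> line_through e1 e2" unfolding line_through_def u_def by auto
  moreover have "u \<in> weight_cone G"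
    unfolding weight_cone_def
  proof (rule CollectI, intro exI conjI)
    show "finite W" by fact
    show "W \<subseteq> weights G" by fact
    show "\<forall>w\<in>W. c w \<ge> 0" unfolding c_def using Cle spos by auto
    show "\<forall>i. u $ i = (\<Sum>w\<in>W. c w * of_int (w $ i))"
    proof
      fix i
      have "(\<Sum>w\<in>W. c w * of_int (w $ i)) = (\<Sum>w\<in>W. of_int ((int (C q w) - int (C p w)) * w$i)) / \<sigma>"
        unfolding c_def by (simp add: sum_divide_distrib)
      also have "\<dots> = of_int (\<alpha> * e1$i + \<beta> * e2$i) / \<sigma>" unfolding eq by simp
      also have "\<dots> = u $ i"
      proof -
        have s0: "\<sigma> \<noteq> 0" using spos by simp
        have omt: "1 - t = of_int \<beta> / \<sigma>" unfolding t_def using s0 unfolding \<sigma>_def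
          by (simp add: field_simps)
        have "u $ i = of_int \<alpha> / \<sigma> * of_int (e1$i) + of_int \<beta> / \<sigma> * of_int (e2$i)"
          unfolding u_def omt by (simp add: t_def)
        also have "\<dots> = of_int (\<alpha> * e1$i + \<beta> * e2$i) / \<sigma>"
          by (simp add: add_divide_distrib)
        finally show ?thesis by simp
      qed
      finally show "u $ i = (\<Sum>w\<in>W. c w * of_int (w $ i))" by simp
    qed
  qed
  ultimately show False using disj by blast
qed


inductive_set addcl :: "'a::comm_ring_1 set \<Rightarrow> 'a set" for S where
  addcl_0: "0 \<in> addcl S"
| addcl_b: "x \<in> S \<Longrightarrow> x \<in> addcl S"
| addcl_add: "x \<in> addcl S \<Longrightarrow> y \<in> addcl S \<Longrightarrow> x + y \<in> addcl S"

lemma addcl_map: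
  assumes "\<And>x y. D (x+y) = D x + D y" "D 0 = 0" "\<And>z. z \<in> S \<Longrightarrow> D z \<in> addcl S'"
  shows "y \<in> addcl S \<Longrightarrow> D y \<in> addcl S'"
  by (induction rule: addcl.induct) (auto simp: assms intro: addcl.intros)

lemma addcl_zero:
  assumes "S \<subseteq> {0}" shows "y \<in> addcl S \<Longrightarrow> y = 0"
  by (induction rule: addcl.induct) (use assms in auto)

definition dv :: "int^'n \<Rightarrow> int^'n \<Rightarrow> int^'n \<Rightarrow> nat \<Rightarrow> nat \<Rightarrow> int^'n" where
  "dv e1 e2 m n j = (\<chi> i. m$i + int j * e1$i + int (n - j) * e2$i)"

lemma iter_in:
  fixes G :: "int^'n \<Rightarrow> 'a::comm_ring_1 set"
  assumes h1: "homogeneous_of_degree G D1 e1" and h2: "homogeneous_of_degree G D2 e2"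
    and a1: "\<And>x y. D1 (x+y) = D1 x + D1 y" and a2: "\<And>x y. D2 (x+y) = D2 x + D2 y"
    and z1: "D1 0 = 0" and z2: "D2 0 = 0"
  shows "x \<in> G m \<Longrightarrow> ((\<lambda>x. D1 x + D2 x) ^^ n) x \<in> addcl (\<Union>j\<in>{..n}. G (dv e1 e2 m n j))"
proof (induction n)
  case 0
  have "dv e1 e2 m 0 0 = m" unfolding dv_def by (simp add: vec_eq_iff)
  then show ?case using 0 by (auto intro: addcl_b)
next
  case (Suc n)
  let ?D = "\<lambda>x. D1 x + D2 x"
  have "?D (((?D) ^^ n) x) \<in> addcl (\<Union>j\<in>{..Suc n}. G (dv e1 e2 m (Suc n) j))"
  proof (rule addcl_map[OF _ _ _ Suc.IH[OF Suc.prems]])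
    show "\<And>x y. ?D (x+y) = ?D x + ?D y" using a1 a2 by (simp add: algebra_simps)
    show "?D 0 = 0" using z1 z2 by simp
    fix z assume "z \<in> (\<Union>j\<in>{..n}. G (dv e1 e2 m n j))"
    then obtain j where j: "j \<le> n" "z \<in> G (dv e1 e2 m n j)" by blast
    have "D1 z \<in> G (dv e1 e2 m n j + e1)" using h1 j unfolding homogeneous_of_degree_def by blast
    moreover have "dv e1 e2 m n j + e1 = dv e1 e2 m (Suc n) (Suc j)"
      unfolding dv_def using j by (simp add: vec_eq_iff algebra_simps)
    ultimately have 1: "D1 z \<in> (\<Union>j\<in>{..Suc n}. G (dv e1 e2 m (Suc n) j))" using j by auto
    have "D2 z \<in> G (dv e1 e2 m n j + e2)" using h2 j unfolding homogeneous_of_degree_def by blast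
    moreover have "dv e1 e2 m n j + e2 = dv e1 e2 m (Suc n) j"
      unfolding dv_def using j by (simp add: vec_eq_iff algebra_simps Suc_diff_le)
    ultimately have 2: "D2 z \<in> (\<Union>j\<in>{..Suc n}. G (dv e1 e2 m (Suc n) j))" using j by auto
    show "?D z \<in> addcl (\<Union>j\<in>{..Suc n}. G (dv e1 e2 m (Suc n) j))"
      using 1 2 by (auto intro: addcl.intros)
  qed
  then show ?case by simp
qed

lemma funpow_zero:
  fixes D :: "'a::zero \<Rightarrow> 'a"
  shows "D 0 = 0 \<Longrightarrow> (D ^^ k) 0 = 0"
  by (induction k) auto

lemma funpow_additive:
  fixes D :: "'a::plus \<Rightarrow> 'a"
  assumes "\<And>x y. D (x+y) = D x + D y"
  shows "(D ^^ k) (x + y) = (D ^^ k) x + (D ^^ k) y"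
  by (induction k) (auto simp: assms)

lemma funpow_sum:
  fixes D :: "'a::comm_monoid_add \<Rightarrow> 'a"
  assumes "\<And>x y. D (x+y) = D x + D y" "D 0 = 0"
  shows "(D ^^ k) (sum f A) = (\<Sum>a\<in>A. (D ^^ k) (f a))"
proof (cases "finite A")
  case True
  then show ?thesis
    by (induction A rule: finite_induct) (auto simp: funpow_zero[of D, OF assms(2)] funpow_additive[OF assms(1)])
next
  case False
  then show ?thesis by (simp add: funpow_zero[of D, OF assms(2)])
qed

theorem proposition6p3:
  fixes K :: "'a::{idom, ring_char_0} set"
    and G :: "int^'n \<Rightarrow> 'a set"
    and D1 D2 :: "'a \<Rightarrow> 'a"
    and e1 e2 :: "int^'n"
  assumes "alg_closed_subfield K"
    and "finitely_generated_algebra K"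
    and "graded_algebra K G"
    and "effective G"
    and "K_derivation K D1" and "homogeneous_of_degree G D1 e1" and "locally_nilpotent D1"
    and "K_derivation K D2" and "homogeneous_of_degree G D2 e2" and "locally_nilpotent D2"
    and "line_through e1 e2 \<inter> weight_cone G = {}"
  shows "locally_nilpotent (\<lambda>x. D1 x + D2 x)"
proof -
  let ?D = "\<lambda>x. D1 x + D2 x"
  have sf: "subfield K" using assms(1) unfolding alg_closed_subfield_def by blast
  have K0: "0 \<in> K" using sf unfolding subfield_def by blast
  have a1: "\<And>x y. D1 (x+y) = D1 x + D1 y" and z1: "D1 0 = 0"
    using assms(5) K0 unfolding K_derivation_def by blast+
  have a2: "\<And>x y. D2 (x+y) = D2 x + D2 y" and z2: "D2 0 = 0"
    using assms(8) K0 unfolding K_derivation_def by blast+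
  have aD: "\<And>x y. ?D (x+y) = ?D x + ?D y" using a1 a2 by (simp add: algebra_simps)
  have zD: "?D 0 = 0" using z1 z2 by simp
  have sub: "\<And>m. K_subspace K (G m)" using assms(3) unfolding graded_algebra_def by blast
  obtain W where W: "finite W" "W \<subseteq> weights G" "weights G \<subseteq> Mon W"
    using weights_Mon[OF sf assms(3) assms(2)] by blast
  have each: "\<forall>m. \<exists>n. \<forall>N\<ge>n. \<forall>x\<in>G m. (?D ^^ N) x = 0"
  proof
    fix m
    obtain n where n: "\<forall>j\<le>n. (\<chi> i. m$i + int j * e1$i + int (n - j) * e2$i) \<notin> weights G"
      using no_weights_far[OF W assms(11)] by blast
    have S0: "(\<Union>j\<in>{..n}. G (dv e1 e2 m n j)) \<subseteq> {0}"
    proof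
      fix y assume "y \<in> (\<Union>j\<in>{..n}. G (dv e1 e2 m n j))"
      then obtain j where j: "j \<le> n" "y \<in> G (dv e1 e2 m n j)" by blast
      have "dv e1 e2 m n j \<notin> weights G" using n[rule_format, OF j(1)] by (simp add: dv_def)
      then have "G (dv e1 e2 m n j) = {0}" unfolding weights_def by simp
      then show "y \<in> {0}" using j by blast
    qed
    have "\<forall>N\<ge>n. \<forall>x\<in>G m. (?D ^^ N) x = 0"
    proof (intro allI impI ballI)
      fix N x assume "n \<le> N" "x \<in> G m"
      have xn: "(?D ^^ n) x = 0"
        using addcl_zero[OF S0 iter_in[OF assms(6) assms(9) a1 a2 z1 z2 \<open>x \<in> G m\<close>]] .
      define k where "k = N - n"
      have "N = k + n" unfolding k_def using \<open>n \<le> N\<close> by simp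
      then have "(?D ^^ N) x = (?D ^^ k) ((?D ^^ n) x)" by (simp add: funpow_add)
      also have "\<dots> = 0" unfolding xn by (rule funpow_zero[of ?D, OF zD])
      finally show "(?D ^^ N) x = 0" .
    qed
    then show "\<exists>n. \<forall>N\<ge>n. \<forall>x\<in>G m. (?D ^^ N) x = 0" by blast
  qed
  from choice[OF each] obtain nf where nf: "\<forall>m. \<forall>N\<ge>nf m. \<forall>x\<in>G m. (?D ^^ N) x = 0" by (elim exE)
  show ?thesis unfolding locally_nilpotent_def
  proof
    fix a
    have dec: "\<forall>a. \<exists>!f. finite {m. f m \<noteq> 0} \<and> (\<forall>m. f m \<in> G m) \<and> a = (\<Sum>m\<in>{m. f m \<noteq> 0}. f m)"
      using assms(3) unfolding graded_algebra_def by blast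
    obtain f where f0: "finite {m. f m \<noteq> 0} \<and> (\<forall>m. f m \<in> G m) \<and> a = (\<Sum>m\<in>{m. f m \<noteq> 0}. f m)"
      using ex1_implies_ex[OF dec[rule_format, of a]] by (elim exE)
    have f: "finite {m. f m \<noteq> 0}" "\<forall>m. f m \<in> G m" "a = (\<Sum>m\<in>{m. f m \<noteq> 0}. f m)"
      using f0 by blast+
    define F where "F = {m. f m \<noteq> 0}"
    define N where "N = (\<Sum>m\<in>F. nf m)"
    have "(?D ^^ N) a = (\<Sum>m\<in>F. (?D ^^ N) (f m))"
      unfolding f(3) F_def[symmetric] by (rule funpow_sum[OF aD zD])
    also have "\<dots> = 0"
    proof (rule sum.neutral, intro ballI)
      fix m assume "m \<in> F"
      moreover have "finite F" unfolding F_def by (rule f(1))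
      ultimately have "nf m \<le> N" unfolding N_def by (intro member_le_sum) auto
      then show "(?D ^^ N) (f m) = 0" using nf[rule_format, of m N "f m"] f(2) by blast
    qed
    finally show "\<exists>n. (?D ^^ n) a = 0" by blast
  qed
qed

end
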